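(* Let $i\in\mathcal N$, let $\mathbf l_i$ be an $m$-cell configuration of $i$, let $\ell\in\mathcal N_i$ and let $\mathbf l_\ell$ be any $m$-cell configuration of $\ell$ consistent with $\mathbf l_i$. Define $H_1(t):=Mt$ and, for $\kappa\ge2$, $H_\kappa(t):=\int_0^te^{L_2(t-s)}L_1\sqrt{N_{\max}}\,H_{\kappa-1}(s)\,ds$, $t\ge0$. Then $$|\chi_\ell^{[i]}(t)-\chi_\ell^{[\ell]}(t)|\le H_m(t)\quad\text{for all }t\in[0,t^*],$$ where $t^*$ is the unique positive solution of $e^{L_2t^*}-\big(L_2+\frac{L_2^2}{L_1\sqrt{N_{\max}}}\big)t^*-1=0$, $N_{\max}=\max_{i\in\mathcal N}N_i$, and $\chi_\ell^{[i]}$, $\chi_\ell^{[\ell]}$ are computed from $\mathbf l_i$ and $\mathbf l_\ell$ respectively.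
   Context: Graph notions: $\mathcal N=\{1,\dots,N\}$ is a finite set of agents, agent $i$ has neighbor set $\mathcal N_i\subset\mathcal N\setminus\{i\}$ of cardinality $N_i$; $\mathcal G=(\mathcal N,\mathcal E)$ with $(\ell,i)\in\mathcal E$ iff $\ell\in\mathcal N_i$; a path of length $m$ is a sequence $i_0\cdots i_m$ with $(i_{k-1},i_k)\in\mathcal E$. For $m\ge1$, $\mathcal N_i^m$ is the set of agents $j\ne i$ having a path of length $m$ to $i$ and no shorter path to $i$; $\mathcal N_i^0=\{i\}$; $\bar{\mathcal N}_i^m=\bigcup_{k=0}^m\mathcal N_i^k$, of cardinality $\bar N_i^m$. Dynamics: each agent has state $x_i\in\mathbb R^n$ and drift $f_i(x_i,\mathbf x_j)$, $\mathbf x_j=(x_{j_1},\dots,x_{j_{N_i}})$ listing the neighbors' states in a fixed order. There are constants $M,L_1,L_2>0$ with $|f_i(x_i,\mathbf x_j)|\le M$, $|f_i(x_i,\mathbf x_j)-f_i(x_i,\mathbf y_j)|\le L_1|\mathbf x_j-\mathbf y_j|$ and $|f_i(x_i,\mathbf x_j)-f_i(y_i,\mathbf x_j)|\le L_2|x_i-y_i|$ for all $x_i,y_i\in\mathbb R^n$, $\mathbf x_j,\mathbf y_j\in\mathbb R^{N_in}$, $i\in\mathcal N$. Cells and reference trajectories: a cell decomposition $\mathcal S=\{S_l\}_{l\in\mathcal I}$ of $\mathbb R^n$ ($\mathcal I$ finite or countable) is a family of uniformly bounded connected sets with pairwise disjoint interiors whose union is $\mathbb R^n$; a reference point $x_{l,G}\in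 S_l$ is fixed for each $l$. Fix the degree of decentralization $m\ge1$. An $m$-cell configuration of agent $i$ is a tuple $\mathbf l_i=(l_\kappa)_{\kappa\in\bar{\mathcal N}_i^m}\in\mathcal I^{\bar N_i^m}$. Given $\mathbf l_i$, define $\chi_\kappa^{[i]}:[0,\infty)\to\mathbb R^n$ for $\kappa\in\bar{\mathcal N}_i^m$ as follows. Case (i), $\mathcal N_i^{m+1}=\emptyset$: $\dot\chi_\kappa^{[i]}(t)=f_\kappa(\chi_\kappa^{[i]}(t),\boldsymbol\chi_{j(\kappa)}^{[i]}(t))$, $\chi_\kappa^{[i]}(0)=x_{l_\kappa,G}$, for all $\kappa\in\bar{\mathcal N}_i^m$, where $\boldsymbol\chi_{j(\kappa)}^{[i]}$ lists $\chi_\nu^{[i]}$, $\nu\in\mathcal N_\kappa$ (these $\nu$ lie in $\bar{\mathcal N}_i^m$). Case (ii), $\mathcal N_i^{m+1}\ne\emptyset$: the same ODE and initial conditions for $\kappa\in\bar{\mathcal N}_i^{m-1}$, while $\chi_\kappa^{[i]}(t):=x_{l_\kappa,G}$ for all $t\ge0$ and $\kappa\in\mathcal N_i^m$. For $\ell\in\mathcal N_i$, an $m$-cell configuration $\mathbf l_\ell=(\bar l_\kappa)_{\kappa\in\bar{\mathcal N}_\ell^m}$ of $\ell$ is consistent with $\mathbf l_i=(l_\kappa)_{\kappa\in\bar{\mathcal N}_i^m}$ if $l_\kappa=\bar l_\kappa$ for all $\kappa\in\bar{\mathcal N}_i^m\cap\bar{\mathcal N}_\ell^m$. *)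

theory Defs
  imports "HOL-Analysis.Analysis"
begin

text \<open>Agents are the elements of a finite type 'a (so the agent set is UNIV).
  nbr i is the neighbour set N_i; (l, i) is an edge iff l \<in> nbr i.\<close>

definition walk :: "('a \<Rightarrow> 'a set) \<Rightarrow> 'a \<Rightarrow> 'a \<Rightarrow> nat \<Rightarrow> bool" where
  "walk nbr j i k \<longleftrightarrow>
     (\<exists>p :: nat \<Rightarrow> 'a. p 0 = j \<and> p k = i \<and> (\<forall>q<k. p q \<in> nbr (p (Suc q))))"

definition layer :: "('a \<Rightarrow> 'a set) \<Rightarrow> 'a \<Rightarrow> nat \<Rightarrow> 'a set" where
  "layer nbr i m = (if m = 0 then {i}
     else {j. j \<noteq> i \<and> walk nbr j i m \<and> (\<forall>k<m. \<not> walk nbr j i k)})"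

definition nball :: "('a \<Rightarrow> 'a set) \<Rightarrow> 'a \<Rightarrow> nat \<Rightarrow> 'a set" where
  "nball nbr i m = (\<Union>k\<in>{..m}. layer nbr i k)"

definition cell_decomp :: "('c \<Rightarrow> 'v::euclidean_space set) \<Rightarrow> ('c \<Rightarrow> 'v) \<Rightarrow> bool" where
  "cell_decomp S xG \<longleftrightarrow>
     countable (UNIV :: 'c set) \<and>
     (\<exists>B. \<forall>l. \<forall>x\<in>S l. \<forall>y\<in>S l. dist x y \<le> B) \<and>
     (\<forall>l. connected (S l)) \<and>
     (\<forall>l l'. l \<noteq> l' \<longrightarrow> interior (S l) \<inter> interior (S l') = {}) \<and>
     (\<Union>l. S l) = UNIV \<and>
     (\<forall>l. xG l \<in> S l)"

definition ode_on ::
  "('a \<Rightarrow> 'v::euclidean_space \<Rightarrow> ('a \<Rightarrow> 'v) \<Rightarrow> 'v) \<Rightarrow> ('c \<Rightarrow> 'v) \<Rightarrow> ('a \<Rightarrow> 'c)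
     \<Rightarrow> 'a set \<Rightarrow> ('a \<Rightarrow> real \<Rightarrow> 'v) \<Rightarrow> bool" where
  "ode_on f xG cfg K chi \<longleftrightarrow>
     (\<forall>k\<in>K. chi k 0 = xG (cfg k) \<and>
        (\<forall>t\<ge>0. (chi k has_vector_derivative f k (chi k t) (\<lambda>v. chi v t)) (at t within {0..})))"

text \<open>chi is the family of reference trajectories chi^[i] computed from the m-cell
  configuration cfg of agent i (only the values of cfg on nball nbr i m matter).\<close>
definition ref_traj ::
  "('a \<Rightarrow> 'a set) \<Rightarrow> ('a \<Rightarrow> 'v::euclidean_space \<Rightarrow> ('a \<Rightarrow> 'v) \<Rightarrow> 'v) \<Rightarrow> ('c \<Rightarrow> 'v)
     \<Rightarrow> nat \<Rightarrow> 'a \<Rightarrow> ('a \<Rightarrow> 'c) \<Rightarrow> ('a \<Rightarrow> real \<Rightarrow> 'v) \<Rightarrow> bool" where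
  "ref_traj nbr f xG m i cfg chi \<longleftrightarrow>
     (if layer nbr i (Suc m) = {} then ode_on f xG cfg (nball nbr i m) chi
      else ode_on f xG cfg (nball nbr i (m - 1)) chi \<and>
           (\<forall>k\<in>layer nbr i m. \<forall>t\<ge>0. chi k t = xG (cfg k)))"

text \<open>H_1(t) = M t, H_{k+1}(t) = int_0^t e^{L2 (t-s)} L1 sqrt(Nmax) H_k(s) ds
  (the argument c stands for L1 * sqrt Nmax; H 0 is an unused dummy).\<close>
fun Hfun :: "real \<Rightarrow> real \<Rightarrow> real \<Rightarrow> nat \<Rightarrow> real \<Rightarrow> real" where
  "Hfun M L2 c 0 t = 0"
| "Hfun M L2 c (Suc 0) t = M * t"
| "Hfun M L2 c (Suc (Suc k)) t =
     integral {0..t} (\<lambda>s. exp (L2 * (t - s)) * c * Hfun M L2 c (Suc k) s)"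

end

theory Submission
  imports Defs
begin


lemma H_rep:
  assumes "t \<ge> 0"
  shows "Hfun M L2 c (Suc (Suc k)) t =
    c * exp (L2*t) * integral {0..t} (\<lambda>x. exp (- (L2*x)) * Hfun M L2 c (Suc k) x)"
proof -
  have "integral {0..t} (\<lambda>x. exp (L2 * (t - x)) * c * Hfun M L2 c (Suc k) x)
      = integral {0..t} (\<lambda>x. (c * exp (L2*t)) * (exp (- (L2*x)) * Hfun M L2 c (Suc k) x))"
  proof (rule integral_cong)
    fix x
    have "exp (L2 * (t - x)) = exp (L2*t) * exp (- (L2*x))"
      by (simp add: right_diff_distrib exp_diff exp_minus divide_inverse)
    then show "exp (L2 * (t - x)) * c * Hfun M L2 c (Suc k) x
       = (c * exp (L2*t)) * (exp (- (L2*x)) * Hfun M L2 c (Suc k) x)" by simp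
  qed
  also have "\<dots> = c * exp (L2*t) * integral {0..t} (\<lambda>x. exp (- (L2*x)) * Hfun M L2 c (Suc k) x)"
    by simp
  finally show ?thesis by (simp only: Hfun.simps)
qed

lemma H_cont1: "continuous_on {0..T} (Hfun M L2 c (Suc k))"
proof (induction k)
  case 0
  have "continuous_on {0..T} (\<lambda>t. M * t)" by (intro continuous_intros)
  then show ?case by (simp only: Hfun.simps)
next
  case (Suc j)
  have ci: "continuous_on {0..T} (\<lambda>x. exp (- (L2*x)) * Hfun M L2 c (Suc j) x)"
    by (intro continuous_intros Suc.IH)
  have "continuous_on {0..T} (\<lambda>t. integral {0..t} (\<lambda>x. exp (- (L2*x)) * Hfun M L2 c (Suc j) x))"
    using continuous_on_vector_derivative[OF integral_has_vector_derivative[OF ci]] by blast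
  then have "continuous_on {0..T} (\<lambda>t. c * exp (L2*t) * integral {0..t} (\<lambda>x. exp (- (L2*x)) * Hfun M L2 c (Suc j) x))"
    by (intro continuous_intros)
  then show ?case
    by (rule continuous_on_cong[THEN iffD1, rotated 2]) (auto simp del: Hfun.simps simp: H_rep)
qed

lemma H_cont: "k \<ge> 1 \<Longrightarrow> continuous_on {0..T} (Hfun M L2 c k)"
  using H_cont1[of T M L2 c "k - 1"] by simp

lemma H_deriv:
  assumes "t \<in> {0..T}"
  shows "(Hfun M L2 c (Suc (Suc k)) has_vector_derivative
           (L2 * Hfun M L2 c (Suc (Suc k)) t + c * Hfun M L2 c (Suc k) t)) (at t within {0..T})"
proof -
  let ?g = "\<lambda>x. exp (- (L2*x)) * Hfun M L2 c (Suc k) x"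
  have ci: "continuous_on {0..T} ?g"
    by (intro continuous_intros H_cont1)
  have d1: "((\<lambda>t. integral {0..t} ?g) has_real_derivative ?g t) (at t within {0..T})"
    using integral_has_vector_derivative[OF ci assms]
    by (simp add: has_real_derivative_iff_has_vector_derivative)
  have "((\<lambda>t. c * exp (L2*t) * integral {0..t} ?g) has_real_derivative
      (c * (exp (L2*t) * L2) * integral {0..t} ?g + c * exp (L2*t) * ?g t)) (at t within {0..T})"
    by (rule derivative_eq_intros d1 refl | simp)+
  moreover have "c * (exp (L2*t) * L2) * integral {0..t} ?g + c * exp (L2*t) * ?g t
     = L2 * Hfun M L2 c (Suc (Suc k)) t + c * Hfun M L2 c (Suc k) t"
    using H_rep[of t M L2 c k] assms by (simp add: algebra_simps exp_minus del: Hfun.simps)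
  ultimately have "((\<lambda>t. c * exp (L2*t) * integral {0..t} ?g) has_vector_derivative
       (L2 * Hfun M L2 c (Suc (Suc k)) t + c * Hfun M L2 c (Suc k) t)) (at t within {0..T})"
    by (simp add: has_real_derivative_iff_has_vector_derivative)
  then show ?thesis
    apply (rule has_vector_derivative_transform_within[where d=1])
    using assms H_rep by (auto simp del: Hfun.simps)
qed

lemma H_integral:
  assumes "t \<ge> 0"
  shows "((\<lambda>x. L2 * Hfun M L2 c (Suc (Suc k)) x + c * Hfun M L2 c (Suc k) x)
            has_integral Hfun M L2 c (Suc (Suc k)) t) {0..t}"
proof -
  have "((\<lambda>x. L2 * Hfun M L2 c (Suc (Suc k)) x + c * Hfun M L2 c (Suc k) x)
            has_integral (Hfun M L2 c (Suc (Suc k)) t - Hfun M L2 c (Suc (Suc k)) 0)) {0..t}"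
    by (rule fundamental_theorem_of_calculus[OF assms H_deriv])
  moreover have "Hfun M L2 c (Suc (Suc k)) 0 = 0"
    using H_rep[of 0 M L2 c k] by (simp del: Hfun.simps)
  ultimately show ?thesis by simp
qed


lemma H_nonneg:
  assumes "M \<ge> 0" "c \<ge> 0" "t \<ge> 0"
  shows "Hfun M L2 c (Suc k) t \<ge> 0"
  using assms(3)
proof (induction k arbitrary: t)
  case 0 then show ?case using assms by simp
next
  case (Suc k)
  have "0 \<le> integral {0..t} (\<lambda>x. exp (- (L2*x)) * Hfun M L2 c (Suc k) x)"
    apply (rule integral_nonneg)
     apply (rule integrable_continuous_real)
     apply (intro continuous_intros H_cont1)
    using Suc.IH by auto
  then show ?case using H_rep[of t M L2 c k] Suc.prems assms
    by (simp del: Hfun.simps)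
qed

lemma H2_explicit:
  assumes "t \<ge> 0" "L2 \<noteq> 0"
  shows "Hfun M L2 c (Suc (Suc 0)) t = c * M * (exp (L2*t) - 1 - L2*t) / L2\<^sup>2"
proof -
  let ?F = "\<lambda>x. - M * exp (- (L2*x)) * (x/L2 + 1/L2\<^sup>2)"
  have "((\<lambda>x. exp (- (L2*x)) * (M * x)) has_integral (?F t - ?F 0)) {0..t}"
  proof (rule fundamental_theorem_of_calculus[OF assms(1)])
    fix x assume "x \<in> {0..t}"
    have "(?F has_real_derivative exp (- (L2*x)) * (M * x)) (at x within {0..t})"
      using assms(2) by (auto intro!: derivative_eq_intros simp: field_simps power2_eq_square)
    then show "(?F has_vector_derivative exp (- (L2*x)) * (M * x)) (at x within {0..t})"
      by (simp add: has_real_derivative_iff_has_vector_derivative)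
  qed
  then have "integral {0..t} (\<lambda>x. exp (- (L2*x)) * Hfun M L2 c (Suc 0) x) = ?F t - ?F 0"
    by (simp add: integral_unique)
  then have "Hfun M L2 c (Suc (Suc 0)) t = c * exp (L2*t) * (?F t - ?F 0)"
    using H_rep[of t M L2 c 0] assms by (simp del: Hfun.simps)
  also have "\<dots> = c * M * (exp (L2*t) - 1 - L2*t) / L2\<^sup>2"
    using assms(2) by (simp add: field_simps power2_eq_square exp_minus)
  finally show ?thesis .
qed

lemma H2_le_H1:
  assumes L2: "L2 > 0" and c: "c > 0" and M: "M \<ge> 0" and ts: "ts > 0"
    and eq: "exp (L2 * ts) - (L2 + L2\<^sup>2 / c) * ts - 1 = 0"
    and t: "t \<in> {0..ts}"
  shows "Hfun M L2 c (Suc (Suc 0)) t \<le> Hfun M L2 c (Suc 0) t"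
proof -
  define lam where "lam = t / ts"
  have lam01: "0 \<le> lam" "lam \<le> 1" using t ts by (auto simp: lam_def)
  have tl: "t = lam * ts" using ts by (simp add: lam_def)
  have "exp ((1 - lam) *\<^sub>R 0 + lam *\<^sub>R (L2*ts)) \<le> (1 - lam) * exp 0 + lam * exp (L2*ts)"
    by (rule convex_onD[OF exp_convex lam01]) auto
  then have "exp (L2*t) \<le> 1 + (L2 + L2\<^sup>2 / c) * t"
    using eq by (simp add: tl algebra_simps)
  then have "c * (exp (L2*t) - 1 - L2*t) \<le> L2\<^sup>2 * t"
    using c by (simp add: field_simps)
  then have "M * (c * (exp (L2*t) - 1 - L2*t)) \<le> M * (L2\<^sup>2 * t)"
    using M by (rule mult_left_mono)
  then have "c * M * (exp (L2*t) - 1 - L2*t) \<le> M * t * L2\<^sup>2"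
    by (simp add: algebra_simps)
  then have "c * M * (exp (L2*t) - 1 - L2*t) / L2\<^sup>2 \<le> M * t"
    using L2 by (simp add: divide_le_eq)
  then show ?thesis using H2_explicit[of t L2 M c] t L2 by simp
qed

lemma H_decr_step:
  assumes L2: "L2 > 0" and c: "c > 0" and M: "M \<ge> 0" and ts: "ts > 0"
    and eq: "exp (L2 * ts) - (L2 + L2\<^sup>2 / c) * ts - 1 = 0"
  shows "t \<in> {0..ts} \<Longrightarrow> Hfun M L2 c (Suc (Suc k)) t \<le> Hfun M L2 c (Suc k) t"
proof (induction k arbitrary: t)
  case 0 then show ?case using H2_le_H1[OF assms] by blast
next
  case (Suc k)
  have "integral {0..t} (\<lambda>x. exp (L2 * (t - x)) * c * Hfun M L2 c (Suc (Suc k)) x)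
     \<le> integral {0..t} (\<lambda>x. exp (L2 * (t - x)) * c * Hfun M L2 c (Suc k) x)"
  proof (rule integral_le)
    show "(\<lambda>x. exp (L2 * (t - x)) * c * Hfun M L2 c (Suc (Suc k)) x) integrable_on {0..t}"
      by (rule integrable_continuous_real, intro continuous_intros H_cont1)
    show "(\<lambda>x. exp (L2 * (t - x)) * c * Hfun M L2 c (Suc k) x) integrable_on {0..t}"
      by (rule integrable_continuous_real, intro continuous_intros H_cont1)
    fix x assume "x \<in> {0..t}"
    then have "Hfun M L2 c (Suc (Suc k)) x \<le> Hfun M L2 c (Suc k) x"
      using Suc by auto
    then show "exp (L2 * (t - x)) * c * Hfun M L2 c (Suc (Suc k)) x
        \<le> exp (L2 * (t - x)) * c * Hfun M L2 c (Suc k) x"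
      using c by (simp add: mult_left_mono)
  qed
  then show ?case by (simp only: Hfun.simps)
qed

lemma H_decr:
  assumes L2: "L2 > 0" and c: "c > 0" and M: "M \<ge> 0" and ts: "ts > 0"
    and eq: "exp (L2 * ts) - (L2 + L2\<^sup>2 / c) * ts - 1 = 0"
    and t: "t \<in> {0..ts}" and k: "1 \<le> k" "k \<le> j"
  shows "Hfun M L2 c j t \<le> Hfun M L2 c k t"
  using k
proof (induction j)
  case 0 then show ?case by simp
next
  case (Suc j)
  show ?case
  proof (cases "k = Suc j")
    case True then show ?thesis by simp
  next
    case False
    then have "k \<le> j" "j \<ge> 1" using Suc.prems by auto
    then obtain j' where j': "j = Suc j'" by (cases j) auto
    have "Hfun M L2 c (Suc j) t \<le> Hfun M L2 c j t"
      using H_decr_step[OF assms(1-5) t, of j'] j' by simp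
    then show ?thesis using Suc.IH[OF \<open>1 \<le> k\<close> \<open>k \<le> j\<close>] by simp
  qed
qed

lemma power_has_integral:
  assumes "t \<ge> (0::real)"
  shows "((\<lambda>x. x ^ n) has_integral t ^ Suc n / Suc n) {0..t}"
proof -
  have "((\<lambda>x. x ^ n) has_integral (t ^ Suc n / Suc n - 0 ^ Suc n / Suc n)) {0..t}"
  proof (rule fundamental_theorem_of_calculus[OF assms])
    fix x assume "x \<in> {0..t}"
    have "((\<lambda>x::real. x ^ Suc n / Suc n) has_real_derivative (Suc n * x ^ n / Suc n)) (at x within {0..t})"
      by (rule derivative_eq_intros refl | simp)+
    then show "((\<lambda>x::real. x ^ Suc n / Suc n) has_vector_derivative x ^ n) (at x within {0..t})"
      by (simp add: has_real_derivative_iff_has_vector_derivative del: of_nat_Suc)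
  qed
  then show ?thesis by simp
qed

lemma gronwall0:
  fixes W :: "real \<Rightarrow> real"
  assumes cont: "continuous_on {0..T} W" and nn: "\<And>t. t \<in> {0..T} \<Longrightarrow> 0 \<le> W t"
    and le: "\<And>t. t \<in> {0..T} \<Longrightarrow> W t \<le> K * integral {0..t} W" and K: "K \<ge> 0"
    and t: "t \<in> {0..T}"
  shows "W t = 0"
proof -
  have ne: "{0..T} \<noteq> {}" using t by auto
  obtain x0 where x0: "x0 \<in> {0..T}" "\<And>y. y \<in> {0..T} \<Longrightarrow> W y \<le> W x0"
    using continuous_attains_sup[OF compact_Icc ne cont] by blast
  define B where "B = W x0"
  have B: "\<And>y. y \<in> {0..T} \<Longrightarrow> W y \<le> B" using x0 B_def by auto
  have claim: "\<And>s. s \<in> {0..T} \<Longrightarrow> W s \<le> B * (K * s) ^ n / fact n" for n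
  proof (induction n)
    case 0 then show ?case using B by simp
  next
    case (Suc n)
    have sub: "{0..s} \<subseteq> {0..T}" using Suc.prems by auto
    have "W s \<le> K * integral {0..s} W" using le Suc.prems by blast
    also have "integral {0..s} W \<le> integral {0..s} (\<lambda>x. (B * K ^ n / fact n) * x ^ n)"
    proof (rule integral_le)
      show "W integrable_on {0..s}"
        using integrable_continuous_real[OF continuous_on_subset[OF cont sub]] .
      show "(\<lambda>x. (B * K ^ n / fact n) * x ^ n) integrable_on {0..s}"
        by (rule integrable_continuous_real, intro continuous_intros)
      fix x assume "x \<in> {0..s}"
      then have "x \<in> {0..T}" using sub by auto
      then show "W x \<le> (B * K ^ n / fact n) * x ^ n"
        using Suc.IH[of x] by (simp add: power_mult_distrib)
    qed
    also have "integral {0..s} (\<lambda>x. (B * K ^ n / fact n) * x ^ n) = (B * K ^ n / fact n) * (s ^ Suc n / Suc n)"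
      using integral_unique[OF power_has_integral[of s n]] Suc.prems by simp
    finally have "W s \<le> K * ((B * K ^ n / fact n) * (s ^ Suc n / Suc n))"
      using K by (simp add: mult_left_mono)
    also have "\<dots> = B * (K * s) ^ Suc n / fact (Suc n)"
      by (simp add: power_mult_distrib field_simps del: of_nat_Suc)
    finally show ?case .
  qed
  have "(\<lambda>n. inverse (fact n) * (K*t) ^ n) \<longlonglongrightarrow> 0"
    by (rule summable_LIMSEQ_zero[OF summable_exp])
  then have "(\<lambda>n. B * (inverse (fact n) * (K*t) ^ n)) \<longlonglongrightarrow> 0"
    by (rule tendsto_mult_right_zero)
  moreover have "\<forall>n\<ge>0. W t \<le> B * (inverse (fact n) * (K*t) ^ n)"
    using claim[OF t] by (simp add: field_simps)
  ultimately have "W t \<le> 0" using LIMSEQ_le_const by blast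
  then show ?thesis using nn[OF t] by simp
qed



lemma walk0: "walk nbr j i 0 \<longleftrightarrow> j = i"
  by (auto simp: walk_def)

lemma walk_snoc:
  assumes "walk nbr j k d" "k \<in> nbr k'"
  shows "walk nbr j k' (Suc d)"
proof -
  obtain p where p: "p 0 = j" "p d = k" "\<forall>q<d. p q \<in> nbr (p (Suc q))"
    using assms(1) by (auto simp: walk_def)
  let ?p = "p(Suc d := k')"
  have "\<forall>q<Suc d. ?p q \<in> nbr (?p (Suc q))"
  proof (intro allI impI)
    fix q assume "q < Suc d"
    then show "?p q \<in> nbr (?p (Suc q))"
      using p assms(2) by (cases "q = d") auto
  qed
  then show ?thesis using p unfolding walk_def by (intro exI[of _ ?p]) auto
qed

lemma walk_cons:
  assumes "v \<in> nbr j" "walk nbr j i d"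
  shows "walk nbr v i (Suc d)"
proof -
  obtain p where p: "p 0 = j" "p d = i" "\<forall>q<d. p q \<in> nbr (p (Suc q))"
    using assms(2) by (auto simp: walk_def)
  let ?p = "\<lambda>q. if q = 0 then v else p (q - 1)"
  have "\<forall>q<Suc d. ?p q \<in> nbr (?p (Suc q))"
  proof (intro allI impI)
    fix q assume "q < Suc d"
    then show "?p q \<in> nbr (?p (Suc q))"
      using p assms(1) by (cases q) auto
  qed
  then show ?thesis using p unfolding walk_def by (intro exI[of _ ?p]) auto
qed

lemma layer_least:
  assumes "walk nbr x i d"
  shows "x \<in> layer nbr i (LEAST d. walk nbr x i d)"
proof -
  define d0 where "d0 = (LEAST d. walk nbr x i d)"
  have w: "walk nbr x i d0" unfolding d0_def by (rule LeastI[of "walk nbr x i", OF assms])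
  have nw: "\<not> walk nbr x i k" if "k < d0" for k
    using that unfolding d0_def by (rule not_less_Least)
  have "x \<in> layer nbr i d0"
  proof (cases "d0 = 0")
    case True
    then have "x = i" using w by (simp add: walk0)
    then show ?thesis using True by (simp add: layer_def)
  next
    case False
    then have "x \<noteq> i" using nw[of 0] walk0[of nbr i i] by auto
    then show ?thesis using False w nw unfolding layer_def by simp
  qed
  then show ?thesis unfolding d0_def .
qed

lemma nball_iff: "x \<in> nball nbr i m \<longleftrightarrow> (\<exists>d\<le>m. walk nbr x i d)"
proof
  assume "x \<in> nball nbr i m"
  then obtain k where "k \<le> m" "x \<in> layer nbr i k" by (auto simp: nball_def)
  show "\<exists>d\<le>m. walk nbr x i d"
  proof (cases "k = 0")
    case True
    then have "x = i" using \<open>x \<in> layer nbr i k\<close> by (simp add: layer_def)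
    then show ?thesis using walk0[of nbr x i] by blast
  next
    case False
    then have "walk nbr x i k" using \<open>x \<in> layer nbr i k\<close> by (simp add: layer_def)
    then show ?thesis using \<open>k \<le> m\<close> by blast
  qed
next
  assume "\<exists>d\<le>m. walk nbr x i d"
  then obtain d where d: "d \<le> m" "walk nbr x i d" by blast
  have "(LEAST d. walk nbr x i d) \<le> d" using d(2) by (rule Least_le)
  then show "x \<in> nball nbr i m"
    using layer_least[OF d(2)] d(1) by (auto simp: nball_def)
qed

lemma layer_pos_iff: "m \<ge> 1 \<Longrightarrow> x \<in> layer nbr i m \<longleftrightarrow> walk nbr x i m \<and> (\<forall>k<m. \<not> walk nbr x i k)"
  using walk0[of nbr i i] by (auto simp: layer_def)

lemma nball_split:
  assumes "x \<in> nball nbr i (Suc m)"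
  shows "x \<in> nball nbr i m \<or> x \<in> layer nbr i (Suc m)"
proof -
  obtain d where d: "d \<le> Suc m" "walk nbr x i d" using assms by (auto simp: nball_iff)
  let ?d = "LEAST d. walk nbr x i d"
  have le: "?d \<le> d" using d(2) by (rule Least_le)
  have "x \<in> layer nbr i ?d" by (rule layer_least[OF d(2)])
  moreover have "walk nbr x i ?d" using LeastI[of "walk nbr x i", OF d(2)] .
  ultimately show ?thesis
  proof (cases "?d = Suc m")
    case True then show ?thesis using \<open>x \<in> layer nbr i ?d\<close> by simp
  next
    case False
    then have "?d \<le> m" using le d(1) by simp
    then have "\<exists>d\<le>m. walk nbr x i d" using \<open>walk nbr x i ?d\<close> by blast
    then show ?thesis unfolding nball_iff by blast
  qed
qed

lemma layer_not_nball:
  assumes "x \<in> layer nbr i (Suc m)" shows "x \<notin> nball nbr i m"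
  using assms by (auto simp: nball_iff layer_pos_iff)

lemma nball_nbr:
  assumes "x \<in> nball nbr i k" "v \<in> nbr x"
  shows "v \<in> nball nbr i (Suc k)"
proof -
  obtain d where "d \<le> k" "walk nbr x i d" using assms(1) unfolding nball_iff by blast
  then have "Suc d \<le> Suc k" "walk nbr v i (Suc d)" using walk_cons[of v nbr x i d] assms(2) by auto
  then show ?thesis unfolding nball_iff by blast
qed

lemma side_facts:
  assumes traj: "ref_traj nbr f xG m i cfg chi" and m: "m \<ge> 1"
    and x: "x \<in> nball nbr i m"
  shows "layer nbr i (Suc m) \<noteq> {} \<and> x \<in> layer nbr i m \<Longrightarrow> (\<forall>t\<ge>0. chi x t = xG (cfg x))"
    and "\<not> (layer nbr i (Suc m) \<noteq> {} \<and> x \<in> layer nbr i m) \<Longrightarrow>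
        chi x 0 = xG (cfg x) \<and>
        (\<forall>t\<ge>0. (chi x has_vector_derivative f x (chi x t) (\<lambda>v. chi v t)) (at t within {0..})) \<and>
        nbr x \<subseteq> nball nbr i m"
proof -
  assume A: "layer nbr i (Suc m) \<noteq> {} \<and> x \<in> layer nbr i m"
  then have "ode_on f xG cfg (nball nbr i (m - 1)) chi \<and> (\<forall>k\<in>layer nbr i m. \<forall>t\<ge>0. chi k t = xG (cfg k))"
    using traj unfolding ref_traj_def by simp
  then have "\<forall>k\<in>layer nbr i m. \<forall>t\<ge>0. chi k t = xG (cfg k)" by (rule conjunct2)
  then show "\<forall>t\<ge>0. chi x t = xG (cfg x)" by (rule bspec[OF _ A[THEN conjunct2]])
next
  assume nf: "\<not> (layer nbr i (Suc m) \<noteq> {} \<and> x \<in> layer nbr i m)"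
  show "chi x 0 = xG (cfg x) \<and>
        (\<forall>t\<ge>0. (chi x has_vector_derivative f x (chi x t) (\<lambda>v. chi v t)) (at t within {0..})) \<and>
        nbr x \<subseteq> nball nbr i m"
  proof (cases "layer nbr i (Suc m) = {}")
    case True
    then have ode: "ode_on f xG cfg (nball nbr i m) chi" using traj unfolding ref_traj_def by simp
    have "nbr x \<subseteq> nball nbr i m"
    proof
      fix v assume "v \<in> nbr x"
      then have "v \<in> nball nbr i (Suc m)" by (rule nball_nbr[OF x])
      then show "v \<in> nball nbr i m" using nball_split[of v nbr i m] True by simp
    qed
    moreover have "chi x 0 = xG (cfg x) \<and>
        (\<forall>t\<ge>0. (chi x has_vector_derivative f x (chi x t) (\<lambda>v. chi v t)) (at t within {0..}))"
      using bspec[OF ode[unfolded ode_on_def] x] .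
    ultimately show ?thesis by blast
  next
    case False
    then have x': "x \<notin> layer nbr i m" using nf by simp
    obtain m' where m': "m = Suc m'" using m by (cases m) auto
    have xm: "x \<in> nball nbr i m'" using nball_split[of x nbr i m'] x x' m' by simp
    have "ode_on f xG cfg (nball nbr i (m - 1)) chi" using traj False unfolding ref_traj_def by simp
    then have ode: "ode_on f xG cfg (nball nbr i m') chi" using m' by simp
    have "nbr x \<subseteq> nball nbr i m"
    proof
      fix v assume "v \<in> nbr x"
      then show "v \<in> nball nbr i m" using nball_nbr[OF xm] m' by simp
    qed
    moreover have "chi x 0 = xG (cfg x) \<and>
        (\<forall>t\<ge>0. (chi x has_vector_derivative f x (chi x t) (\<lambda>v. chi v t)) (at t within {0..}))"
      using bspec[OF ode[unfolded ode_on_def] xm] .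
    ultimately show ?thesis by blast
  qed
qed

lemma ode_cont:
  fixes g :: "real \<Rightarrow> 'v::euclidean_space"
  assumes "\<forall>t\<ge>0. (g has_vector_derivative F t) (at t within {0..})"
  shows "continuous_on {0..} g"
  by (rule continuous_on_vector_derivative) (use assms in auto)

lemma ode_integral:
  fixes g :: "real \<Rightarrow> 'v::euclidean_space"
  assumes "\<forall>t\<ge>0. (g has_vector_derivative F t) (at t within {0..})" "t \<ge> 0"
  shows "(F has_integral (g t - g 0)) {0..t}"
proof (rule fundamental_theorem_of_calculus[OF assms(2)])
  fix x assume "x \<in> {0..t}"
  then show "(g has_vector_derivative F x) (at x within {0..t})"
    using assms(1) by (auto intro: has_vector_derivative_within_subset)
qed

lemma ode_speed:
  fixes g :: "real \<Rightarrow> 'v::euclidean_space"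
  assumes "\<forall>t\<ge>0. (g has_vector_derivative F t) (at t within {0..})" "t \<ge> 0"
    and "\<And>s. norm (F s) \<le> M" "M \<ge> 0"
  shows "norm (g t - g 0) \<le> M * t"
proof -
  have "(F has_integral (g t - g 0)) (cbox 0 t)"
    using ode_integral[OF assms(1,2)] by simp
  from has_integral_bound[OF assms(4) this] assms(2,3)
  show ?thesis by simp
qed



theorem proposition1:
  fixes nbr :: "'a::finite \<Rightarrow> 'a set"
    and f :: "'a \<Rightarrow> real^'n \<Rightarrow> ('a \<Rightarrow> real^'n) \<Rightarrow> real^'n"
    and S :: "'c \<Rightarrow> (real^'n) set" and xG :: "'c \<Rightarrow> real^'n"
    and M L1 L2 tstar :: real and m :: nat and i l :: 'a
    and cfg_i cfg_l :: "'a \<Rightarrow> 'c"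
    and chi_i chi_l :: "'a \<Rightarrow> real \<Rightarrow> real^'n"
  assumes nbr_irrefl: "\<And>j. j \<notin> nbr j"
    and M_pos: "M > 0" and L1_pos: "L1 > 0" and L2_pos: "L2 > 0"
    and f_bound: "\<And>j x y. norm (f j x y) \<le> M"
    and f_lip1: "\<And>j x y z. norm (f j x y - f j x z)
                   \<le> L1 * sqrt (\<Sum>v\<in>nbr j. (norm (y v - z v))\<^sup>2)"
    and f_lip2: "\<And>j x x' y. norm (f j x y - f j x' y) \<le> L2 * norm (x - x')"
    and cells: "cell_decomp S xG"
    and m_pos: "m \<ge> 1"
    and l_nbr: "l \<in> nbr i"
    and consistent: "\<forall>k \<in> nball nbr i m \<inter> nball nbr l m. cfg_i k = cfg_l k"
    and traj_i: "ref_traj nbr f xG m i cfg_i chi_i"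
    and traj_l: "ref_traj nbr f xG m l cfg_l chi_l"
    and tstar_pos: "tstar > 0"
    and tstar_eq: "exp (L2 * tstar)
        - (L2 + L2\<^sup>2 / (L1 * sqrt (real (Max (range (\<lambda>j. card (nbr j))))))) * tstar - 1 = 0"
  shows "\<forall>t\<in>{0..tstar}. norm (chi_i l t - chi_l l t)
           \<le> Hfun M L2 (L1 * sqrt (real (Max (range (\<lambda>j. card (nbr j)))))) m t"
proof -
  define N where "N = Max (range (\<lambda>j. card (nbr j)))"
  define c where "c = L1 * sqrt (real N)"
  define H where "H = Hfun M L2 c"
  have N_ge: "card (nbr j) \<le> N" for j
    unfolding N_def by (rule Max_ge) auto
  have "card (nbr i) \<ge> 1"
    using l_nbr by (metis One_nat_def Suc_leI card_gt_0_iff empty_iff finite)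
  then have N_pos: "N \<ge> 1" using N_ge[of i] by simp
  have c_pos: "c > 0" unfolding c_def using L1_pos N_pos by simp
  have eq': "exp (L2 * tstar) - (L2 + L2\<^sup>2 / c) * tstar - 1 = 0"
    using tstar_eq unfolding c_def N_def .
  have H0: "H 0 = (\<lambda>t. 0)" unfolding H_def by (rule ext) simp
  have H1: "H (Suc 0) t = M * t" for t unfolding H_def by simp
  have Hn: "t \<ge> 0 \<Longrightarrow> H k t \<ge> 0" for k t
    unfolding H_def using H_nonneg[of M c t L2] M_pos c_pos
    by (cases k) (auto simp del: Hfun.simps simp: Hfun.simps(1))
  have Hc: "continuous_on {0..T} (H k)" for k T
  proof (cases k)
    case 0 then show ?thesis using H0 by simp
  next
    case (Suc k') then show ?thesis unfolding H_def by (simp only: H_cont1)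
  qed
  have Hd: "t \<in> {0..tstar} \<Longrightarrow> 1 \<le> k \<Longrightarrow> k \<le> j \<Longrightarrow> H j t \<le> H k t" for t k j
    unfolding H_def using H_decr[OF L2_pos c_pos _ tstar_pos eq'] M_pos by simp

  define U where "U = nball nbr i m \<inter> nball nbr l m"
  define fzi where "fzi x \<longleftrightarrow> layer nbr i (Suc m) \<noteq> {} \<and> x \<in> layer nbr i m" for x
  define fzl where "fzl x \<longleftrightarrow> layer nbr l (Suc m) \<noteq> {} \<and> x \<in> layer nbr l m" for x
  define u where "u = (\<lambda>x s. norm (chi_i x s - chi_l x s))"
  define S0 where "S0 = {x\<in>U. fzi x \<or> fzl x}"
  define R where "R x \<longleftrightarrow> (\<exists>\<phi>\<in>S0. \<exists>d. walk nbr \<phi> x d)" for x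
  define dst where "dst x = (LEAST d. \<exists>\<phi>\<in>S0. walk nbr \<phi> x d)" for x
  define b where "b = (\<lambda>x t. if R x then H (Suc (dst x)) t else 0)"
  define W where "W = (\<lambda>t. \<Sum>x\<in>U. max 0 (u x t - b x t))"

  have Ui: "x \<in> U \<Longrightarrow> x \<in> nball nbr i m" for x unfolding U_def by simp
  have Ul: "x \<in> U \<Longrightarrow> x \<in> nball nbr l m" for x unfolding U_def by simp
  have cons: "x \<in> U \<Longrightarrow> cfg_i x = cfg_l x" for x using consistent unfolding U_def by blast
  have fi: "x \<in> U \<Longrightarrow> fzi x \<Longrightarrow> \<forall>t\<ge>0. chi_i x t = xG (cfg_i x)" for x
    using side_facts(1)[OF traj_i m_pos Ui] unfolding fzi_def by blast
  have fl: "x \<in> U \<Longrightarrow> fzl x \<Longrightarrow> \<forall>t\<ge>0. chi_l x t = xG (cfg_l x)" for x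
    using side_facts(1)[OF traj_l m_pos Ul] unfolding fzl_def by blast
  have oi: "x \<in> U \<Longrightarrow> \<not> fzi x \<Longrightarrow> chi_i x 0 = xG (cfg_i x) \<and>
        (\<forall>t\<ge>0. (chi_i x has_vector_derivative f x (chi_i x t) (\<lambda>v. chi_i v t)) (at t within {0..})) \<and>
        nbr x \<subseteq> nball nbr i m" for x
    using side_facts(2)[OF traj_i m_pos Ui] unfolding fzi_def by blast
  have ol: "x \<in> U \<Longrightarrow> \<not> fzl x \<Longrightarrow> chi_l x 0 = xG (cfg_l x) \<and>
        (\<forall>t\<ge>0. (chi_l x has_vector_derivative f x (chi_l x t) (\<lambda>v. chi_l v t)) (at t within {0..})) \<and>
        nbr x \<subseteq> nball nbr l m" for x
    using side_facts(2)[OF traj_l m_pos Ul] unfolding fzl_def by blast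
  have init: "x \<in> U \<Longrightarrow> chi_i x 0 = chi_l x 0" for x
  proof -
    assume x: "x \<in> U"
    have "chi_i x 0 = xG (cfg_i x)" using fi[OF x] oi[OF x] by (cases "fzi x") auto
    moreover have "chi_l x 0 = xG (cfg_l x)" using fl[OF x] ol[OF x] by (cases "fzl x") auto
    ultimately show ?thesis using cons[OF x] by simp
  qed
  have conti: "x \<in> U \<Longrightarrow> continuous_on {0..} (chi_i x)" for x
  proof (cases "fzi x")
    case True
    assume x: "x \<in> U"
    show ?thesis
      by (rule continuous_on_eq[OF continuous_on_const]) (use fi[OF x True] in auto)
  next
    case False
    assume x: "x \<in> U"
    show ?thesis by (rule ode_cont[where F="\<lambda>t. f x (chi_i x t) (\<lambda>v. chi_i v t)"]) (use oi[OF x False] in blast)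
  qed
  have contl: "x \<in> U \<Longrightarrow> continuous_on {0..} (chi_l x)" for x
  proof (cases "fzl x")
    case True
    assume x: "x \<in> U"
    show ?thesis
      by (rule continuous_on_eq[OF continuous_on_const]) (use fl[OF x True] in auto)
  next
    case False
    assume x: "x \<in> U"
    show ?thesis by (rule ode_cont[where F="\<lambda>t. f x (chi_l x t) (\<lambda>v. chi_l v t)"]) (use ol[OF x False] in blast)
  qed
  have contu: "x \<in> U \<Longrightarrow> continuous_on {0..T} (u x)" for x T
  proof -
    assume x: "x \<in> U"
    have "continuous_on {0..} (\<lambda>s. norm (chi_i x s - chi_l x s))"
      by (intro continuous_intros conti[OF x] contl[OF x])
    then show ?thesis unfolding u_def by (rule continuous_on_subset) auto
  qed
  have contb: "continuous_on {0..T} (b x)" for x T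
    unfolding b_def by (cases "R x") (simp_all add: Hc)
  have contW: "continuous_on {0..T} W" for T
    unfolding W_def by (intro continuous_intros contu contb) auto
  have Wnn: "W t \<ge> 0" for t unfolding W_def by (intro sum_nonneg) simp
  have term_le: "x \<in> U \<Longrightarrow> u x t - b x t \<le> W t" for x t
  proof -
    assume x: "x \<in> U"
    have "max 0 (u x t - b x t) \<le> W t"
      unfolding W_def by (rule member_le_sum[OF x]) auto
    then show ?thesis by simp
  qed
  have unn: "u x t \<ge> 0" for x t unfolding u_def by simp
  have dst_pos: "x \<notin> S0 \<Longrightarrow> R x \<Longrightarrow> dst x \<noteq> 0" for x
  proof
    assume x: "x \<notin> S0" "R x" "dst x = 0"
    have "\<exists>\<phi>\<in>S0. walk nbr \<phi> x (dst x)"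
      unfolding dst_def by (rule LeastI_ex) (use x(2) R_def in blast)
    then show False using x walk0 by (metis)
  qed
  have R_walk: "R x \<Longrightarrow> \<exists>\<phi>\<in>S0. walk nbr \<phi> x (dst x)" for x
    unfolding dst_def by (rule LeastI_ex) (auto simp: R_def)

  have key: "u x t - b x t \<le> (L2 + c) * integral {0..t} W"
    if t: "t \<in> {0..tstar}" and x: "x \<in> U" for t x
  proof -
    have t0: "0 \<le> t" "t \<le> tstar" using t by auto
    have iW: "0 \<le> integral {0..t} W"
      by (rule integral_nonneg) (rule integrable_continuous_real[OF contW], rule Wnn)
    show ?thesis
    proof (cases "x \<in> S0")
      case True
      have Rx: "R x" unfolding R_def using True walk0[of nbr x x] by blast
      have "dst x = 0" unfolding dst_def by (rule Least_eq_0) (use True walk0[of nbr x x] in blast)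
      then have bx: "b x t = M * t" unfolding b_def using Rx H1 by simp
      have bi: "norm (chi_i x t - chi_i x 0) \<le> M * t"
      proof (cases "fzi x")
        case True then show ?thesis using fi[OF x] t0 M_pos by simp
      next
        case False
        then have "\<forall>s\<ge>0. (chi_i x has_vector_derivative f x (chi_i x s) (\<lambda>v. chi_i v s)) (at s within {0..})"
          using oi[OF x] by blast
        then show ?thesis by (rule ode_speed) (use t0 f_bound M_pos in auto)
      qed
      have bl: "norm (chi_l x t - chi_l x 0) \<le> M * t"
      proof (cases "fzl x")
        case True then show ?thesis using fl[OF x] t0 M_pos by simp
      next
        case False
        then have "\<forall>s\<ge>0. (chi_l x has_vector_derivative f x (chi_l x s) (\<lambda>v. chi_l v s)) (at s within {0..})"
          using ol[OF x] by blast
        then show ?thesis by (rule ode_speed) (use t0 f_bound M_pos in auto)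
      qed
      have "u x t \<le> M * t"
      proof (cases "fzi x")
        case True
        then have "chi_i x t = chi_i x 0" using fi[OF x] t0 by simp
        then have "u x t = norm (chi_l x t - chi_l x 0)"
          unfolding u_def using init[OF x] by (simp add: norm_minus_commute)
        then show ?thesis using bl by simp
      next
        case False
        then have "fzl x" using True unfolding S0_def by simp
        then have "chi_l x t = chi_l x 0" using fl[OF x] t0 by simp
        then have "u x t = norm (chi_i x t - chi_i x 0)"
          unfolding u_def using init[OF x] by simp
        then show ?thesis using bi by simp
      qed
      moreover have "0 \<le> (L2 + c) * integral {0..t} W" using iW L2_pos c_pos by simp
      ultimately show ?thesis using bx by linarith
    next
      case False
      then have nfi: "\<not> fzi x" and nfl: "\<not> fzl x" using x unfolding S0_def by auto
      define Fi where "Fi = (\<lambda>s. f x (chi_i x s) (\<lambda>v. chi_i v s))"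
      define Fl where "Fl = (\<lambda>s. f x (chi_l x s) (\<lambda>v. chi_l v s))"
      have Di: "\<forall>s\<ge>0. (chi_i x has_vector_derivative Fi s) (at s within {0..})"
        using oi[OF x nfi] unfolding Fi_def by blast
      have Dl: "\<forall>s\<ge>0. (chi_l x has_vector_derivative Fl s) (at s within {0..})"
        using ol[OF x nfl] unfolding Fl_def by blast
      have nU: "nbr x \<subseteq> U" using oi[OF x nfi] ol[OF x nfl] unfolding U_def by blast
      define \<beta> where "\<beta> = (\<lambda>s. if R x then H (dst x) s else 0)"
      have contbeta: "continuous_on {0..T} \<beta>" for T
        unfolding \<beta>_def by (cases "R x") (simp_all add: Hc)
      have bint: "((\<lambda>s. L2 * b x s + c * \<beta> s) has_integral b x t) {0..t}"
      proof (cases "R x")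
        case True
        obtain d' where d': "dst x = Suc d'" using dst_pos[OF False True] not0_implies_Suc by blast
        show ?thesis
          unfolding b_def \<beta>_def using True d' H_integral[OF t0(1), of L2 M c d'] unfolding H_def by simp
      next
        case False
        then show ?thesis unfolding b_def \<beta>_def by simp
      qed
      have bnn: "s \<in> {0..tstar} \<Longrightarrow> 0 \<le> \<beta> s" for s
        unfolding \<beta>_def using Hn by simp
      have nbb: "v \<in> nbr x \<Longrightarrow> s \<in> {0..tstar} \<Longrightarrow> b v s \<le> \<beta> s" for v s
      proof -
        assume v: "v \<in> nbr x" and s: "s \<in> {0..tstar}"
        show "b v s \<le> \<beta> s"
        proof (cases "R v")
          case True
          then obtain \<phi> where \<phi>: "\<phi> \<in> S0" "walk nbr \<phi> v (dst v)" using R_walk by blast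
          have w: "walk nbr \<phi> x (Suc (dst v))" by (rule walk_snoc[OF \<phi>(2) v])
          then have Rx: "R x" unfolding R_def using \<phi>(1) by blast
          have "\<exists>\<phi>\<in>S0. walk nbr \<phi> x (Suc (dst v))" using w \<phi>(1) by blast
          then have "dst x \<le> Suc (dst v)" unfolding dst_def[of x] by (rule Least_le)
          moreover have "1 \<le> dst x" using dst_pos[OF False Rx] by simp
          ultimately have "H (Suc (dst v)) s \<le> H (dst x) s" using Hd[OF s] by simp
          then show ?thesis unfolding b_def \<beta>_def using True Rx by simp
        next
          case False
          then show ?thesis unfolding b_def using bnn[OF s] by simp
        qed
      qed
      have Fb: "norm (Fi s - Fl s) \<le> L2 * u x s + c * (\<beta> s + W s)" if s: "s \<in> {0..t}" for s
      proof -
        have s': "s \<in> {0..tstar}" using s t0 by auto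
        have "norm (Fi s - Fl s) \<le> norm (f x (chi_i x s) (\<lambda>v. chi_i v s) - f x (chi_i x s) (\<lambda>v. chi_l v s))
             + norm (f x (chi_i x s) (\<lambda>v. chi_l v s) - f x (chi_l x s) (\<lambda>v. chi_l v s))"
          unfolding Fi_def Fl_def by (rule norm_diff_triangle_le[where y="f x (chi_i x s) (\<lambda>v. chi_l v s)"]) simp_all
        also have "\<dots> \<le> L1 * sqrt (\<Sum>v\<in>nbr x. (norm (chi_i v s - chi_l v s))\<^sup>2) + L2 * u x s"
          unfolding u_def by (intro add_mono f_lip1 f_lip2)
        also have "L1 * sqrt (\<Sum>v\<in>nbr x. (norm (chi_i v s - chi_l v s))\<^sup>2) \<le> c * (\<beta> s + W s)"
        proof -
          have q: "0 \<le> \<beta> s + W s" using bnn[OF s'] Wnn[of s] by simp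
          have "(\<Sum>v\<in>nbr x. (norm (chi_i v s - chi_l v s))\<^sup>2) \<le> real (card (nbr x)) * (\<beta> s + W s)\<^sup>2"
          proof (rule sum_bounded_above)
            fix v assume v: "v \<in> nbr x"
            have "u v s - b v s \<le> W s" using term_le nU v by blast
            then have "u v s \<le> \<beta> s + W s" using nbb[OF v s'] by simp
            then show "(norm (chi_i v s - chi_l v s))\<^sup>2 \<le> (\<beta> s + W s)\<^sup>2"
              unfolding u_def by (intro power_mono) auto
          qed
          then have "sqrt (\<Sum>v\<in>nbr x. (norm (chi_i v s - chi_l v s))\<^sup>2) \<le> sqrt (real (card (nbr x)) * (\<beta> s + W s)\<^sup>2)"
            by (rule real_sqrt_le_mono)
          also have "\<dots> = sqrt (real (card (nbr x))) * (\<beta> s + W s)"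
            using q by (simp add: real_sqrt_mult)
          also have "\<dots> \<le> sqrt (real N) * (\<beta> s + W s)"
            using q N_ge[of x] by (intro mult_right_mono) auto
          finally show ?thesis unfolding c_def using L1_pos
            by (simp add: mult.assoc mult_left_mono)
        qed
        finally show ?thesis by simp
      qed
      have Ii: "(Fi has_integral (chi_i x t - chi_i x 0)) {0..t}" by (rule ode_integral[OF Di t0(1)])
      have Il: "(Fl has_integral (chi_l x t - chi_l x 0)) {0..t}" by (rule ode_integral[OF Dl t0(1)])
      have Id: "((\<lambda>s. Fi s - Fl s) has_integral (chi_i x t - chi_l x t)) {0..t}"
        using has_integral_diff[OF Ii Il] init[OF x] by simp
      have cu: "continuous_on {0..t} (u x)" by (rule contu[OF x])
      have cg: "continuous_on {0..t} (\<lambda>s. L2 * u x s + c * (\<beta> s + W s))"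
        by (intro continuous_intros cu contbeta contW)
      have "u x t = norm (integral {0..t} (\<lambda>s. Fi s - Fl s))"
        unfolding u_def using integral_unique[OF Id] by simp
      also have "\<dots> \<le> integral {0..t} (\<lambda>s. L2 * u x s + c * (\<beta> s + W s))"
        by (rule integral_norm_bound_integral[OF has_integral_integrable[OF Id] integrable_continuous_real[OF cg] Fb])
      finally have ui: "u x t \<le> integral {0..t} (\<lambda>s. L2 * u x s + c * (\<beta> s + W s))" .
      have cb: "continuous_on {0..t} (\<lambda>s. L2 * b x s + c * \<beta> s)"
        by (intro continuous_intros contb contbeta)
      have "u x t - b x t \<le> integral {0..t} (\<lambda>s. L2 * u x s + c * (\<beta> s + W s))
           - integral {0..t} (\<lambda>s. L2 * b x s + c * \<beta> s)"
        using ui integral_unique[OF bint] by simp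
      also have "\<dots> = integral {0..t} (\<lambda>s. (L2 * u x s + c * (\<beta> s + W s)) - (L2 * b x s + c * \<beta> s))"
        by (rule integral_diff[symmetric]) (rule integrable_continuous_real[OF cg], rule integrable_continuous_real[OF cb])
      also have "\<dots> \<le> integral {0..t} (\<lambda>s. (L2 + c) * W s)"
      proof (rule integral_le)
        show "(\<lambda>s. (L2 * u x s + c * (\<beta> s + W s)) - (L2 * b x s + c * \<beta> s)) integrable_on {0..t}"
          by (rule integrable_continuous_real) (intro continuous_intros cu contbeta contW contb)
        show "(\<lambda>s. (L2 + c) * W s) integrable_on {0..t}"
          by (rule integrable_continuous_real) (intro continuous_intros contW)
        fix s assume "s \<in> {0..t}"
        have "u x s - b x s \<le> W s" by (rule term_le[OF x])
        then have "L2 * (u x s - b x s) \<le> L2 * W s" using L2_pos by (intro mult_left_mono) auto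
        then show "(L2 * u x s + c * (\<beta> s + W s)) - (L2 * b x s + c * \<beta> s) \<le> (L2 + c) * W s"
          by (simp add: algebra_simps)
      qed
      also have "\<dots> = (L2 + c) * integral {0..t} W" by simp
      finally show ?thesis .
    qed
  qed

  have W0: "W t = 0" if t: "t \<in> {0..tstar}" for t
  proof (rule gronwall0[OF contW _ _ _ t])
    show "0 \<le> W s" for s by (rule Wnn)
    show "0 \<le> real (card U) * (L2 + c)" using L2_pos c_pos by simp
    fix s assume s: "s \<in> {0..tstar}"
    have iW: "0 \<le> integral {0..s} W"
      by (rule integral_nonneg) (rule integrable_continuous_real[OF contW], rule Wnn)
    have Wd: "W s = (\<Sum>x\<in>U. max 0 (u x s - b x s))" unfolding W_def by simp
    have "(\<Sum>x\<in>U. max 0 (u x s - b x s)) \<le> real (card U) * ((L2 + c) * integral {0..s} W)"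
    proof (rule sum_bounded_above)
      fix x assume "x \<in> U"
      then show "max 0 (u x s - b x s) \<le> (L2 + c) * integral {0..s} W"
        using key[OF s] iW L2_pos c_pos by simp
    qed
    then show "W s \<le> real (card U) * (L2 + c) * integral {0..s} W" using Wd by simp
  qed
  show ?thesis
  proof
    fix t assume t: "t \<in> {0..tstar}"
    have w1: "walk nbr l i (Suc 0)" using walk_cons[of l nbr i i 0] l_nbr walk0[of nbr i i] by simp
    have w0: "walk nbr l l 0" by (simp add: walk0)
    have "l \<in> nball nbr i m" unfolding nball_iff using w1 m_pos by auto
    moreover have "l \<in> nball nbr l m" unfolding nball_iff using w0 by auto
    ultimately have lU: "l \<in> U" unfolding U_def by simp
    have "u l t \<le> b l t" using term_le[OF lU, of t] W0[OF t] by simp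
    also have "b l t \<le> H m t"
    proof (cases "R l")
      case True
      then obtain \<phi> where \<phi>: "\<phi> \<in> S0" "walk nbr \<phi> l (dst l)" using R_walk by blast
      have "m \<le> Suc (dst l)"
      proof (cases "fzi \<phi>")
        case True
        then have "\<phi> \<in> layer nbr i m" unfolding fzi_def by simp
        moreover have "walk nbr \<phi> i (Suc (dst l))" by (rule walk_snoc[OF \<phi>(2) l_nbr])
        ultimately show ?thesis using m_pos layer_pos_iff not_less by metis
      next
        case False
        then have "fzl \<phi>" using \<phi>(1) unfolding S0_def by simp
        then have "\<phi> \<in> layer nbr l m" unfolding fzl_def by simp
        then have "dst l \<ge> m" using \<phi>(2) m_pos layer_pos_iff not_less by metis
        then show ?thesis by simp
      qed
      then show ?thesis using Hd[OF t m_pos] True unfolding b_def by simp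
    next
      case False then show ?thesis unfolding b_def using Hn t by simp
    qed
    finally show "norm (chi_i l t - chi_l l t)
           \<le> Hfun M L2 (L1 * sqrt (real (Max (range (\<lambda>j. card (nbr j)))))) m t"
      unfolding u_def H_def c_def N_def .
  qed
qed

end
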